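(* Let $C\subset\mathbb{R}^2$ be the closed disk with center $(a,b)$ and radius $r>0$, and for $i\in\mathbb{N}$ let $C_i$ be the closed disk with center $(ia,ib)$ and radius $ir$. Let $\tau_2$ be the extremal ray of $L_{\mathbb{Q}_{\geq}}(C\cap\mathbb{R}^2_{\geq})$ of smaller slope, and suppose $C\cap\tau_2$ is a single point. For each $i$ with $C_i\cap C_{i+1}\neq\emptyset$, let $P_i$ be the point of $C_i\cap C_{i+1}$ closest to $\tau_2$. Then $\lim_{i\to\infty}\mathrm{d}(P_i,\tau_2)=0$.
   Context: $\mathbb{N}=\{0,1,2,\dots\}$. For $A\subseteq\mathbb{R}^2_{\geq}$, $L_{\mathbb{Q}_{\geq}}(A)=\{\sum_{i=1}^p q_ia_i\mid p\in\mathbb{N},\ q_i\in\mathbb{Q}_{\geq},\ a_i\in A\}$ and its extremal rays are its two boundary half-lines from the origin. $\mathrm{d}(P,\tau_2)$ is the Euclidean distance from the point $P$ to the line $\tau_2$. *)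

theory Defs
  imports "HOL-Analysis.Analysis"
begin

text \<open>Points of the plane are modelled as real \<times> real; the product metric is Euclidean.\<close>

definition quadrant :: "(real \<times> real) set" where
  "quadrant = {p. 0 \<le> fst p \<and> 0 \<le> snd p}"

definition rat_cone :: "(real \<times> real) set \<Rightarrow> (real \<times> real) set" where
  "rat_cone A = {x. \<exists>(p::nat) q a. (\<forall>i<p. q i \<in> \<rat> \<and> 0 \<le> q i \<and> a i \<in> A)
                      \<and> x = (\<Sum>i<p. q i *\<^sub>R a i)}"

definition ray :: "real \<times> real \<Rightarrow> (real \<times> real) set" where
  "ray v = {t *\<^sub>R v | t. 0 \<le> t}"

definition line :: "real \<times> real \<Rightarrow> (real \<times> real) set" where
  "line v = {t *\<^sub>R v | t. True}"

definition extremal_ray :: "(real \<times> real) set \<Rightarrow> real \<times> real \<Rightarrow> bool" where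
  "extremal_ray K v \<longleftrightarrow> v \<noteq> 0 \<and> ray v \<subseteq> frontier K"

text \<open>The extremal ray of smaller slope (slopes compared via cross-multiplication,
  which is valid for directions in the closed first quadrant, including vertical ones).\<close>
definition smaller_slope_extremal_ray :: "(real \<times> real) set \<Rightarrow> real \<times> real \<Rightarrow> bool" where
  "smaller_slope_extremal_ray K v \<longleftrightarrow> extremal_ray K v \<and>
     (\<forall>w. extremal_ray K w \<longrightarrow> snd v * fst w \<le> snd w * fst v)"

definition scaled_disk :: "real \<Rightarrow> real \<Rightarrow> real \<Rightarrow> nat \<Rightarrow> (real \<times> real) set" where
  "scaled_disk a b r i = cball (real i * a, real i * b) (real i * r)"

end

theory Submission
  imports Defs
begin

lemma key:
  fixes x1 x2 d1 d2 r h s e t :: real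
  assumes "d1^2+d2^2 = r^2" "x1*d1+x2*d2=0" "r>0" "e^2 = 1" "t = h/r"
  shows "(e*x1/2 + (t - s)*d1)^2 + (e*x2/2 + (t - s)*d2)^2 = (x1^2+x2^2)/4 + (h - s*r)^2"
proof -
  have "(e*x1/2 + (t - s)*d1)^2 + (e*x2/2 + (t - s)*d2)^2
     = e^2*(x1^2+x2^2)/4 + e*(t-s)*(x1*d1+x2*d2) + (t-s)^2*(d1^2+d2^2)"
    by (simp add: power2_eq_square algebra_simps)
  also have "\<dots> = (x1^2+x2^2)/4 + ((t-s)*r)^2" using assms(1,2,4)
    by (simp add: power_mult_distrib)
  also have "(t-s)*r = h - s*r" using assms(3,5) by (simp add: field_simps)
  finally show ?thesis .
qed

lemma cb: "r \<ge> 0 \<Longrightarrow> (x,y) \<in> cball (a,b) r \<longleftrightarrow> (x-a)^2+(y-b)^2 \<le> r^2"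
  apply (simp add: dist_Pair_Pair dist_real_def power2_commute)
  by (metis abs_of_nonneg real_sqrt_abs real_sqrt_le_iff real_sqrt_le_mono)

lemma cb2: "r \<ge> 0 \<Longrightarrow> dist (a,b) (x,y) \<le> r \<longleftrightarrow> (x-a)^2+(y-b)^2 \<le> r^2"
  using cb by simp

lemma zero_in:
  fixes a b r n :: real
  assumes "a^2+b^2 \<le> r^2"
  shows "(0 - n*a)^2 + (0-n*b)^2 \<le> (n*r)^2"
proof -
  have "(0 - n*a)^2 + (0-n*b)^2 = n^2*(a^2+b^2)" by (simp add: power_mult_distrib algebra_simps)
  also have "\<dots> \<le> n^2 * r^2" using assms by (simp add: mult_left_mono)
  finally show ?thesis by (simp add: power_mult_distrib)
qed

lemma scale_expand:
  fixes x1 x2 a b u :: real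
  shows "((1+u)*x1 - a)^2 + ((1+u)*x2 - b)^2
    = ((a-x1)^2+(b-x2)^2) - 2*u*(x1*(a-x1)+x2*(b-x2)) + u^2*(x1^2+x2^2)"
  by (simp add: power2_eq_square algebra_simps)

theorem lemma4p1:
  fixes a b r :: real and v :: "real \<times> real" and P :: "nat \<Rightarrow> real \<times> real"
  assumes "r > 0"
    and "smaller_slope_extremal_ray (rat_cone (cball (a, b) r \<inter> quadrant)) v"
    and "is_singleton (cball (a, b) r \<inter> ray v)"
    and "\<forall>i. scaled_disk a b r i \<inter> scaled_disk a b r (Suc i) \<noteq> {} \<longrightarrow>
           P i \<in> scaled_disk a b r i \<inter> scaled_disk a b r (Suc i) \<and>
           (\<forall>q \<in> scaled_disk a b r i \<inter> scaled_disk a b r (Suc i).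
               infdist (P i) (line v) \<le> infdist q (line v))"
  shows "(\<lambda>i. infdist (P i) (line v)) \<longlonglongrightarrow> 0"
proof -
  note P = assms(4)
  have Pbound: "infdist (P i) (line v) \<le> infdist q (line v)"
    if "q \<in> scaled_disk a b r i" "q \<in> scaled_disk a b r (Suc i)" for i q
    using P that by blast
  have r0: "r \<ge> 0" using assms(1) by simp
  show ?thesis
  proof (cases "a^2+b^2 \<le> r^2")
    case True
    have "infdist (P i) (line v) = 0" for i
    proof -
      have z: "(0::real,0::real) \<in> scaled_disk a b r n" for n
        unfolding scaled_disk_def
        using cb[of "real n * r" 0 0 "real n * a" "real n * b"] zero_in[OF True, of "real n"] r0
        by simp
      have "(0::real,0::real) \<in> line v" unfolding line_def
        by (rule CollectI, rule exI[of _ 0], simp add: zero_prod_def)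
      hence "infdist (0,0) (line v) = 0" by (rule infdist_zero)
      thus ?thesis using Pbound[OF z[of i] z[of "Suc i"]] infdist_nonneg[of "P i" "line v"] by linarith
    qed
    thus ?thesis by simp
  next
    case False
    obtain X where XE: "cball (a, b) r \<inter> ray v = {X}" using assms(3) by (auto simp: is_singleton_def)
    obtain x1 x2 where Xd: "X = (x1,x2)" by (cases X)
    have XC: "X \<in> cball (a,b) r" and Xr: "X \<in> ray v" using XE by auto
    obtain t where t: "X = t *\<^sub>R v" "0 \<le> t" using Xr unfolding ray_def by auto
    define d1 where "d1 = a - x1"
    define d2 where "d2 = b - x2"
    define N where "N = x1^2+x2^2"
    define k where "k = x1*d1+x2*d2"
    define W where "W = d1^2+d2^2"
    have W: "W \<le> r^2" using XC r0 unfolding Xd W_def d1_def d2_def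
      by (simp add: cb cb2 power2_commute)
    have Xn0: "X \<noteq> 0"
    proof
      assume "X = 0"
      hence "(0::real,0::real) \<in> cball (a,b) r" using XC by (simp add: zero_prod_def)
      thus False using False r0 by (simp add: cb cb2)
    qed
    have Npos: "N > 0" using Xn0 unfolding N_def Xd
      by (simp add: zero_prod_def sum_power2_gt_zero_iff)
    have uniq: False if s1: "s > -1" "s \<noteq> 0" and s2: "W - 2 * s * k + s^2*N \<le> r^2" for s
    proof -
      have "((1+s)*x1, (1+s)*x2) \<in> cball (a,b) r"
        using s2 r0 scale_expand[of s x1 a x2 b] by (simp add: cb cb2 W_def k_def d1_def d2_def N_def)
      moreover have "((1+s)*x1, (1+s)*x2) \<in> ray v"
      proof -
        have "((1+s)*x1, (1+s)*x2) = ((1+s)*t) *\<^sub>R v"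
          using t(1) Xd by (metis scaleR_Pair scaleR_scaleR real_scaleR_def)
        moreover have "0 \<le> (1+s)*t" using t(2) s1 by simp
        ultimately show ?thesis unfolding ray_def by blast
      qed
      ultimately have "((1+s)*x1, (1+s)*x2) = X" using XE by blast
      hence "s*x1 = 0" "s*x2 = 0" using Xd by (auto simp: algebra_simps)
      hence "x1 = 0" "x2 = 0" using s1 by auto
      thus False using Xn0 Xd by (simp add: zero_prod_def)
    qed
    have k0: "k = 0"
    proof (rule ccontr)
      assume kn: "k \<noteq> 0"
      define s where "s = k/(N+\<bar>k\<bar>)"
      have den: "N + \<bar>k\<bar> > 0" using Npos by simp
      have sl: "\<bar>s\<bar> < 1" unfolding s_def using den Npos kn by (simp add: abs_div)
      have sk: "s*k = k^2/(N+\<bar>k\<bar>)" unfolding s_def by (simp add: power2_eq_square)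
      have "s^2*N = k^2*N/(N+\<bar>k\<bar>)^2" unfolding s_def by (simp add: power_divide)
      also have "\<dots> = (k^2/(N+\<bar>k\<bar>)) * (N/(N+\<bar>k\<bar>))"
        by (simp add: power2_eq_square)
      also have "\<dots> < (k^2/(N+\<bar>k\<bar>)) * 1"
        using den kn Npos by (intro mult_strict_left_mono) auto
      also have "\<dots> = k^2/(N+\<bar>k\<bar>)" by simp
      finally have "s^2*N < s*k" using sk by simp
      moreover have "s^2*N \<ge> 0" using Npos by simp
      moreover have "2 * s * k = 2*(s*k)" by simp
      ultimately have "W - 2 * s * k + s^2*N \<le> r^2" using W by linarith
      moreover have "s \<noteq> 0" using kn den unfolding s_def by simp
      ultimately show False using uniq sl by force
    qed
    have Wr: "W = r^2"
    proof (rule ccontr)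
      assume "W \<noteq> r^2"
      hence lt: "W < r^2" using W by simp
      define s where "s = min 1 ((r^2-W)/N)"
      have sp: "s > 0" unfolding s_def using lt Npos by simp
      have s1: "s \<le> 1" "s \<le> (r^2-W)/N" unfolding s_def by auto
      have "s^2*N \<le> s*N" using sp s1 Npos by (simp add: power2_eq_square)
      also have "\<dots> \<le> r^2 - W" using s1 Npos by (simp add: pos_le_divide_eq mult.commute)
      finally have "W - 2 * s * k + s^2*N \<le> r^2" using k0 by simp
      thus False using uniq sp by force
    qed
    obtain I :: nat where I: "(N+1)/r < real I" using reals_Archimedean2 by blast
    define g where "g = (\<lambda>n::nat. (N/(4*r)) / real n)"
    have ev: "\<forall>\<^sub>F n in sequentially. infdist (P n) (line v) \<le> g n"
      unfolding eventually_sequentially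
    proof (intro exI allI impI)
      fix n assume nI: "I \<le> n"
      have nr: "real n * r > N + 1"
      proof -
        have "(N+1) < real I * r" using I assms(1) by (simp add: pos_divide_less_eq)
        also have "\<dots> \<le> real n * r" using nI assms(1) by (simp add: mult_right_mono)
        finally show ?thesis .
      qed
      have npos: "real n > 0"
      proof (rule ccontr)
        assume "\<not> real n > 0"
        hence "real n = 0" by simp
        with nr Npos show False by simp
      qed
      define h where "h = N/(4*real n*r)"
      have hpos: "h > 0" unfolding h_def using Npos npos assms(1) by simp
      have h2: "2*h*(real n*r) = N/2" unfolding h_def using npos assms(1) by simp
      have D: "4*real n*r > 0" using npos assms(1) by simp
      have hq: "h < 1/4" unfolding h_def using nr Npos
        by (simp add: pos_divide_less_eq[OF D])
      have "N*1 < N*(4*real n*r)" using Npos nr by (intro mult_strict_left_mono) auto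
      hence hN: "h < N" unfolding h_def by (simp add: pos_divide_less_eq[OF D])
      have hh: "h^2 \<le> N/4"
      proof -
        have "h*h < (1/4)*N" using hq hN hpos by (intro mult_strict_mono) auto
        thus ?thesis by (simp add: power2_eq_square)
      qed
      define m where "m = real n + 1/2"
      define q where "q = (m*x1 + (h/r)*d1, m*x2 + (h/r)*d2)"
      have Wr': "d1^2+d2^2 = r^2" using Wr W_def by simp
      have k0': "x1*d1+x2*d2 = 0" using k0 k_def by simp
      have q1: "q \<in> scaled_disk a b r n"
      proof -
        have e1: "m*x1 + (h/r)*d1 - real n*a = 1*x1/2 + (h/r - real n)*d1"
          "m*x2 + (h/r)*d2 - real n*b = 1*x2/2 + (h/r - real n)*d2"
          unfolding m_def d1_def d2_def by (simp_all add: algebra_simps)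
        have "(m*x1 + (h/r)*d1 - real n*a)^2 + (m*x2 + (h/r)*d2 - real n*b)^2
             = N/4 + (h - real n*r)^2"
          unfolding e1 N_def by (rule key[OF Wr' k0' assms(1)]) simp_all
        also have "\<dots> \<le> (real n*r)^2" using h2 hh by (simp add: power2_diff)
        finally show ?thesis unfolding scaled_disk_def q_def
          using npos r0 by (simp add: cb cb2)
      qed
      have q2: "q \<in> scaled_disk a b r (Suc n)"
      proof -
        have e1: "m*x1 + (h/r)*d1 - (real n+1)*a = (-1)*x1/2 + (h/r - (real n+1))*d1"
          "m*x2 + (h/r)*d2 - (real n+1)*b = (-1)*x2/2 + (h/r - (real n+1))*d2"
          unfolding m_def d1_def d2_def by (simp_all add: algebra_simps)
        have "(m*x1 + (h/r)*d1 - (real n+1)*a)^2 + (m*x2 + (h/r)*d2 - (real n+1)*b)^2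
             = N/4 + (h - (real n+1)*r)^2"
          unfolding e1 N_def by (rule key[OF Wr' k0' assms(1)]) simp_all
        also have "\<dots> \<le> ((real n+1)*r)^2"
        proof -
          have "2*h*((real n+1)*r) \<ge> N/2" using h2 hpos assms(1)
            by (simp add: algebra_simps)
          thus ?thesis using hh by (simp add: power2_diff)
        qed
        finally show ?thesis unfolding scaled_disk_def q_def
          using npos r0 by (simp add: cb cb2 add.commute)
      qed
      have Mline: "(m*x1, m*x2) \<in> line v" unfolding line_def
      proof -
        have "(m*x1, m*x2) = (m*t) *\<^sub>R v"
          using t(1) Xd by (metis scaleR_Pair scaleR_scaleR real_scaleR_def)
        thus "(m*x1, m*x2) \<in> {t *\<^sub>R v |t. True}" by blast
      qed
      have "dist q (m*x1, m*x2) = sqrt (((h/r)*d1)^2 + ((h/r)*d2)^2)"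
        unfolding q_def by (simp add: dist_Pair_Pair dist_real_def power_divide)
      also have "\<dots> = sqrt ((h/r)^2 * (d1^2+d2^2))"
        by (simp only: power_mult_distrib distrib_left)
      also have "\<dots> = h" using Wr' hpos assms(1)
        by (simp add: power_divide real_sqrt_divide)
      finally have "infdist q (line v) \<le> h" using infdist_le[OF Mline, of q] by simp
      hence "infdist (P n) (line v) \<le> h" using Pbound[OF q1 q2] by simp
      moreover have "h = g n" unfolding g_def h_def by simp
      ultimately show "infdist (P n) (line v) \<le> g n" by simp
    qed
    have gl: "g \<longlonglongrightarrow> 0" unfolding g_def by (rule lim_const_over_n)
    show ?thesis
      by (rule tendsto_sandwich[OF _ ev tendsto_const gl]) (simp add: infdist_nonneg)
  qed
qed

end
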